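(* Let $H_1,\dots,H_n$, $PV_1,\dots,PV_n$, $I$, $F_1,\dots,F_n$ and $G$ be as follows: the $p$-values have arbitrary joint dependence, $I$ is the set of true nulls, $F_i$ is the null distribution function of $PV_i$ (so $P(PV_j\le x)=F_j(x)$ for $j\in I$) with $F_i(u)\le u$ for all $u\in(0,1)$, and $G(x)=\sum_{i=1}^nF_i(x)$. Let $0=\tilde y_0\le\tilde y_1\le\cdots\le\tilde y_n$ with $\tilde y_n>0$, define $D=\sum_{i=1}^n\frac{1}{i}(\tilde y_i-\tilde y_{i-1})$, and for $\alpha\in(0,1)$ set $y_i=\frac{\alpha}{D}\tilde y_i$. Let $0\le c_1\le\cdots\le c_n\le1$ satisfy $G(c_i)\le y_i$ for $i=1,\dots,n$. Then the step-up procedure with critical values $c$ satisfies $\mathrm{FDR}(c)\le\alpha$. In particular, for $\tilde y_i=i$ one has $D=\sum_{i=1}^n 1/i$, and for $\tilde y_i=i(i+1)$ one has $D=2n$.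
   Context: Step-up procedure with critical values $c_1\le\cdots\le c_n$: let $PV_{(1)}\le\cdots\le PV_{(n)}$ be the ordered $p$-values with corresponding hypotheses $H_{(1)},\dots,H_{(n)}$; let $k=\max\{i: PV_{(i)}\le c_i\}$ and reject $H_{(1)},\dots,H_{(k)}$; if no such $i$ exists, reject nothing. With $R$ the number of rejections and $V$ the number of rejected true null hypotheses, $\mathrm{FDR}(c)=E[V/\max(R,1)]$. *)

theory Defs
  imports "HOL-Probability.Probability"
begin

text \<open>The ordered p-values: sorted_pv n PV w ! (i-1) is PV_(i) (the i-th smallest).\<close>
definition sorted_pv :: "nat \<Rightarrow> (nat \<Rightarrow> 'a \<Rightarrow> real) \<Rightarrow> 'a \<Rightarrow> real list" where
  "sorted_pv n PV w = sort (map (\<lambda>j. PV j w) [1..<n+1])"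

definition ordered_hyps :: "nat \<Rightarrow> (nat \<Rightarrow> 'a \<Rightarrow> real) \<Rightarrow> 'a \<Rightarrow> nat list" where
  "ordered_hyps n PV w = sort_key (\<lambda>j. PV j w) [1..<n+1]"

definition stepup_k :: "nat \<Rightarrow> (nat \<Rightarrow> real) \<Rightarrow> (nat \<Rightarrow> 'a \<Rightarrow> real) \<Rightarrow> 'a \<Rightarrow> nat" where
  "stepup_k n c PV w = Max ({i \<in> {1..n}. sorted_pv n PV w ! (i - 1) \<le> c i} \<union> {0})"

definition stepup_rejected :: "nat \<Rightarrow> (nat \<Rightarrow> real) \<Rightarrow> (nat \<Rightarrow> 'a \<Rightarrow> real) \<Rightarrow> 'a \<Rightarrow> nat set" where
  "stepup_rejected n c PV w = set (take (stepup_k n c PV w) (ordered_hyps n PV w))"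

definition FDR :: "'a measure \<Rightarrow> nat \<Rightarrow> nat set \<Rightarrow> (nat \<Rightarrow> 'a \<Rightarrow> real) \<Rightarrow> (nat \<Rightarrow> real) \<Rightarrow> real" where
  "FDR M n I PV c = (\<integral>w. real (card (stepup_rejected n c PV w \<inter> I))
        / real (max (card (stepup_rejected n c PV w)) 1) \<partial>M)"

end

theory Submission
  imports Defs
begin

lemma sort_map_key: "sort (map f xs) = map f (sort_key f xs)"
  by (rule properties_for_sort) (simp_all)

lemma abel_sum:
  fixes f y :: "nat \<Rightarrow> real"
  assumes "y 0 = 0"
  shows "(\<Sum>i=1..n. (f i - f (Suc i)) * y i) = (\<Sum>i=1..n. f i * (y i - y (i - 1))) - f (Suc n) * y n"
proof (induction n)
  case 0 then show ?case using assms by simp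
next
  case (Suc n)
  then show ?case by (simp add: algebra_simps)
qed

lemma c_mono_gen:
  fixes c :: "nat \<Rightarrow> real"
  assumes "\<And>i. 1 \<le> i \<Longrightarrow> i < n \<Longrightarrow> c i \<le> c (Suc i)" "1 \<le> k" "k \<le> i" "i \<le> n"
  shows "c k \<le> c i"
  using assms(3,4)
proof (induction i rule: dec_induct)
  case base then show ?case by simp
next
  case (step m)
  then show ?case using assms(1)[of m] assms(2) by linarith
qed

lemma yt_nonneg:
  fixes yt :: "nat \<Rightarrow> real"
  assumes "yt 0 = 0" "\<And>i. i < n \<Longrightarrow> yt i \<le> yt (Suc i)" "i \<le> n"
  shows "0 \<le> yt i"
  using assms(3)
proof (induction i)
  case 0 then show ?case using assms(1) by simp
next
  case (Suc i) then show ?case using assms(2)[of i] by simp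
qed

definition hh :: "nat \<Rightarrow> nat \<Rightarrow> real" where
  "hh n i = (if i \<le> n then 1 / real i else 0)"

definition wt :: "nat \<Rightarrow> nat \<Rightarrow> real" where
  "wt n i = hh n i - hh n (Suc i)"

lemma wt_nonneg: "1 \<le> i \<Longrightarrow> 0 \<le> wt n i"
  by (auto simp: wt_def hh_def frac_le)

lemma wt_tail: "1 \<le> k \<Longrightarrow> k \<le> n \<Longrightarrow> (\<Sum>i=k..n. wt n i) = 1 / real k"
proof -
  assume a: "1 \<le> k" "k \<le> n"
  have "(\<Sum>i=k..n. wt n i) = (\<Sum>i=k..n. (\<lambda>i. - hh n i) (Suc i) - (\<lambda>i. - hh n i) i)"
    by (simp add: wt_def)
  also have "\<dots> = - hh n (Suc n) + hh n k" using a by (subst sum_Suc_diff) auto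
  finally show ?thesis using a by (simp add: hh_def)
qed

lemma sorted_facts:
  fixes PV :: "nat \<Rightarrow> 'a \<Rightarrow> real"
  assumes k: "stepup_k n c PV w = k" "1 \<le> k"
  shows "k \<le> n" "card (stepup_rejected n c PV w) = k"
    "\<And>j. j \<in> stepup_rejected n c PV w \<Longrightarrow> PV j w \<le> c k"
proof -
  let ?A = "{i \<in> {1..n}. sorted_pv n PV w ! (i - 1) \<le> c i} \<union> {0}"
  have fin: "finite ?A" by auto
  have "Max ?A \<in> ?A" using fin by (intro Max_in) auto
  then have kA: "k \<in> {1..n}" "sorted_pv n PV w ! (k - 1) \<le> c k"
    using k unfolding stepup_k_def by auto
  then show kn: "k \<le> n" by simp
  let ?L = "ordered_hyps n PV w"
  have Ld: "distinct ?L" and Ll: "length ?L = n" by (auto simp: ordered_hyps_def)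
  have S: "sorted_pv n PV w = map (\<lambda>j. PV j w) ?L"
    by (simp add: sorted_pv_def ordered_hyps_def sort_map_key)
  have sS: "sorted (sorted_pv n PV w)" by (simp add: sorted_pv_def)
  show "card (stepup_rejected n c PV w) = k"
    unfolding stepup_rejected_def using Ld Ll kn k
    by (simp add: distinct_card)
  fix j assume "j \<in> stepup_rejected n c PV w"
  then obtain m where m: "m < k" "j = ?L ! m"
    unfolding stepup_rejected_def using Ll kn k
    by (auto simp: in_set_conv_nth)
  have "PV j w = sorted_pv n PV w ! m" using m Ll kn S by simp
  also have "\<dots> \<le> sorted_pv n PV w ! (k - 1)"
    using sS m kn by (intro sorted_nth_mono) (auto simp: sorted_pv_def)
  also have "\<dots> \<le> c k" using kA by simp
  finally show "PV j w \<le> c k" .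
qed

lemma zero_case:
  assumes "stepup_k n c PV w = 0"
  shows "stepup_rejected n c PV w = {}"
  using assms by (simp add: stepup_rejected_def)

theorem corollary1:
  fixes M :: "'a measure" and n :: nat and I :: "nat set"
    and PV :: "nat \<Rightarrow> 'a \<Rightarrow> real" and F :: "nat \<Rightarrow> real \<Rightarrow> real"
    and yt :: "nat \<Rightarrow> real" and c :: "nat \<Rightarrow> real" and \<alpha> :: real
  assumes "prob_space M"
    and PV_meas: "\<And>j. j \<in> {1..n} \<Longrightarrow> PV j \<in> borel_measurable M"
    and I_sub: "I \<subseteq> {1..n}"
    and F_cdf: "\<And>i. i \<in> {1..n} \<Longrightarrow> mono (F i) \<and> (\<forall>x. 0 \<le> F i x \<and> F i x \<le> 1)"
    and F_null: "\<And>j x. j \<in> I \<Longrightarrow> measure M {w \<in> space M. PV j w \<le> x} = F j x"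
    and F_le: "\<And>i u. i \<in> {1..n} \<Longrightarrow> 0 < u \<Longrightarrow> u < 1 \<Longrightarrow> F i u \<le> u"
    and yt0: "yt 0 = 0"
    and yt_mono: "\<And>i. i < n \<Longrightarrow> yt i \<le> yt (Suc i)"
    and ytn: "yt n > 0"
    and alpha: "0 < \<alpha>" "\<alpha> < 1"
    and c_nonneg: "0 \<le> c 1"
    and c_mono: "\<And>i. 1 \<le> i \<Longrightarrow> i < n \<Longrightarrow> c i \<le> c (Suc i)"
    and c_le1: "c n \<le> 1"
    and c_G: "\<And>i. i \<in> {1..n} \<Longrightarrow>
        (\<Sum>l=1..n. F l (c i)) \<le> \<alpha> / (\<Sum>l=1..n. (1 / real l) * (yt l - yt (l - 1))) * yt i"
  shows "FDR M n I PV c \<le> \<alpha>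
     \<and> (\<Sum>l=1..n. (1 / real l) * (real l - real (l - 1))) = (\<Sum>l=1..n. 1 / real l)
     \<and> (\<Sum>l=1..n. (1 / real l) * (real l * (real l + 1) - real (l - 1) * (real (l - 1) + 1)))
         = 2 * real n"
proof (intro conjI)
  show "(\<Sum>l=1..n. (1 / real l) * (real l - real (l - 1))) = (\<Sum>l=1..n. 1 / real l)"
    by (rule sum.cong) (auto simp: of_nat_diff)
  have "(\<Sum>l=1..n. (1 / real l) * (real l * (real l + 1) - real (l - 1) * (real (l - 1) + 1)))
       = (\<Sum>l=1..n. 2)"
    by (rule sum.cong) (auto simp: of_nat_diff field_simps)
  then show "(\<Sum>l=1..n. (1 / real l) * (real l * (real l + 1) - real (l - 1) * (real (l - 1) + 1)))
         = 2 * real n" by simp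
  interpret prob_space M by fact
  define D where "D = (\<Sum>l=1..n. (1 / real l) * (yt l - yt (l - 1)))"
  have n1: "1 \<le> n" using ytn yt0 by (cases n) auto
  have Dwt: "(\<Sum>i=1..n. wt n i * yt i) = D"
    unfolding wt_def D_def using abel_sum[of yt "hh n" n, OF yt0]
    by (simp add: hh_def)
  have "wt n n * yt n \<le> (\<Sum>i=1..n. wt n i * yt i)"
    using n1 by (intro member_le_sum) (auto intro!: mult_nonneg_nonneg wt_nonneg yt_nonneg[OF yt0 yt_mono])
  moreover have "wt n n * yt n > 0" using n1 ytn by (simp add: wt_def hh_def)
  ultimately have Dpos: "D > 0" using Dwt by simp
  define A where "A j i = {x \<in> space M. PV j x \<le> c i}" for j i
  have Ameas: "A j i \<in> sets M" if "j \<in> I" for j i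
  proof -
    have "PV j \<in> borel_measurable M" using PV_meas[of j] that I_sub by auto
    then show ?thesis unfolding A_def by measurable
  qed
  define g where "g j x = (\<Sum>i=1..n. wt n i * indicator (A j i) x)" for j x
  have g_nonneg: "0 \<le> g j x" for j x
    unfolding g_def by (intro sum_nonneg) (auto intro!: mult_nonneg_nonneg wt_nonneg)
  have g_big: "1 / real k \<le> g j x" if "x \<in> space M" "1 \<le> k" "k \<le> n" "PV j x \<le> c k" for j x k
  proof -
    have "1 / real k = (\<Sum>i=k..n. wt n i)" using wt_tail that by simp
    also have "\<dots> = (\<Sum>i=k..n. wt n i * indicator (A j i) x)"
    proof (rule sum.cong)
      fix i assume "i \<in> {k..n}"
      then have "c k \<le> c i" using c_mono_gen[of n c k i, OF c_mono] that by auto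
      then show "wt n i = wt n i * indicator (A j i) x" using that by (auto simp: A_def)
    qed simp
    also have "\<dots> \<le> g j x" unfolding g_def using that
      by (intro sum_mono2) (auto intro!: mult_nonneg_nonneg wt_nonneg)
    finally show ?thesis .
  qed
  have finI: "finite I" using I_sub finite_subset by blast
  have pw: "real (card (stepup_rejected n c PV x \<inter> I)) / real (max (card (stepup_rejected n c PV x)) 1)
      \<le> (\<Sum>j\<in>I. g j x)" if x: "x \<in> space M" for x
  proof (cases "stepup_k n c PV x = 0")
    case True
    then show ?thesis using zero_case[OF True] by (simp add: sum_nonneg g_nonneg)
  next
    case False
    define k where "k = stepup_k n c PV x"
    have k1: "1 \<le> k" using False k_def by simp
    note sf = sorted_facts[OF k_def[symmetric] k1]
    let ?R = "stepup_rejected n c PV x"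
    have finR: "finite ?R" by (simp add: stepup_rejected_def)
    have "real (card (?R \<inter> I)) / real (max (card ?R) 1) = (\<Sum>j\<in>?R \<inter> I. 1 / real k)"
      using sf k1 by simp
    also have "\<dots> \<le> (\<Sum>j\<in>?R \<inter> I. g j x)"
      by (intro sum_mono g_big[OF x k1 sf(1)]) (auto intro: sf(3))
    also have "\<dots> \<le> (\<Sum>j\<in>I. g j x)"
      using finI by (intro sum_mono2) (auto simp: g_nonneg)
    finally show ?thesis .
  qed
  have intg: "integrable M (\<lambda>x. \<Sum>j\<in>I. g j x)"
  proof (rule Bochner_Integration.integrable_sum)
    fix j assume j: "j \<in> I"
    show "integrable M (g j)" unfolding g_def
    proof (rule Bochner_Integration.integrable_sum)
      fix i show "integrable M (\<lambda>x. wt n i * indicator (A j i) x)"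
        using Ameas[OF j, of i] by (intro integrable_mult_right integrable_real_indicator) (auto simp: emeasure_eq_measure)
    qed
  qed
  have Eg: "(\<integral>x. (\<Sum>j\<in>I. g j x) \<partial>M) = (\<Sum>j\<in>I. \<Sum>i=1..n. wt n i * F j (c i))"
  proof -
    have "(\<integral>x. (\<Sum>j\<in>I. g j x) \<partial>M) = (\<Sum>j\<in>I. \<Sum>i=1..n. wt n i * measure M (A j i))"
    proof -
      have ii: "integrable M (\<lambda>x. wt n i * indicator (A j i) x)" if "j \<in> I" for i j
        using Ameas[OF that, of i] by (intro integrable_mult_right integrable_real_indicator) (auto simp: emeasure_eq_measure)
      have "(\<integral>x. (\<Sum>j\<in>I. g j x) \<partial>M) = (\<Sum>j\<in>I. (\<integral>x. g j x \<partial>M))"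
        unfolding g_def using ii by (intro Bochner_Integration.integral_sum Bochner_Integration.integrable_sum) auto
      also have "\<dots> = (\<Sum>j\<in>I. \<Sum>i=1..n. (\<integral>x. wt n i * indicator (A j i) x \<partial>M))"
        unfolding g_def using ii by (intro sum.cong refl Bochner_Integration.integral_sum) auto
      also have "\<dots> = (\<Sum>j\<in>I. \<Sum>i=1..n. wt n i * measure M (A j i))"
        using Ameas by (intro sum.cong refl) (auto simp: Int_absorb2 sets.sets_into_space)
      finally show ?thesis .
    qed
    also have "\<dots> = (\<Sum>j\<in>I. \<Sum>i=1..n. wt n i * F j (c i))"
      using F_null by (auto simp: A_def)
    finally show ?thesis .
  qed
  have bound: "(\<Sum>j\<in>I. \<Sum>i=1..n. wt n i * F j (c i)) \<le> \<alpha>"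
  proof -
    have "(\<Sum>j\<in>I. \<Sum>i=1..n. wt n i * F j (c i)) = (\<Sum>i=1..n. wt n i * (\<Sum>j\<in>I. F j (c i)))"
      by (subst sum.swap) (simp add: sum_distrib_left)
    also have "\<dots> \<le> (\<Sum>i=1..n. wt n i * (\<Sum>l=1..n. F l (c i)))"
      using I_sub F_cdf
      by (intro sum_mono mult_left_mono sum_mono2) (auto intro: wt_nonneg)
    also have "\<dots> \<le> (\<Sum>i=1..n. wt n i * (\<alpha> / D * yt i))"
      using c_G unfolding D_def[symmetric]
      by (intro sum_mono mult_left_mono) (auto intro: wt_nonneg)
    also have "\<dots> = \<alpha> / D * (\<Sum>i=1..n. wt n i * yt i)"
      by (simp add: sum_distrib_left algebra_simps)
    also have "\<dots> = \<alpha>" using Dwt Dpos by simp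
    finally show ?thesis .
  qed
  show "FDR M n I PV c \<le> \<alpha>"
  proof (cases "integrable M (\<lambda>w. real (card (stepup_rejected n c PV w \<inter> I))
        / real (max (card (stepup_rejected n c PV w)) 1))")
    case True
    have "FDR M n I PV c \<le> (\<integral>x. (\<Sum>j\<in>I. g j x) \<partial>M)"
      unfolding FDR_def using True intg pw by (intro integral_mono) auto
    then show ?thesis using Eg bound by simp
  next
    case False
    then show ?thesis using alpha by (simp add: FDR_def not_integrable_integral_eq)
  qed
qed

end
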